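(* Let $\varphi,\phi$ be GFG-QPTL formulas. Then $\varphi$ is $\exists\forall$-satisfiable iff $\varphi$ is $\forall\exists$-satisfiable. Moreover, $\varphi\Rightarrow^{\exists\forall}\phi$ iff $\varphi\Rightarrow^{\forall\exists}\phi$, and $\varphi\equiv^{\exists\forall}\phi$ iff $\varphi\equiv^{\forall\exists}\phi$.
   Context: Let $AP$ be a set of atomic propositions and $\mathbb B=\{\top,\bot\}$. A temporal valuation is a function $f:\mathbb N\to\mathbb B$. An assignment is a partial function $\chi:AP\rightharpoonup(\mathbb N\to\mathbb B)$; $\mathrm{Asg}$ is the set of all assignments, $\mathrm{Asg}(P)$ the set of assignments with domain exactly $P\subseteq AP$. For an assignment $\chi$, $p\in AP$ and a temporal valuation $f$, $\chi[p\mapsto f]$ is the assignment that agrees with $\chi$ except that it maps $p$ to $f$. A hyperassignment is a set $\mathcal X$ with $\emptyset\neq\mathcal X\subseteq 2^{\mathrm{Asg}(P)}$ and $\emptyset\notin\mathcal X$, for some $P\subseteq AP$; this $P$ is denoted $\mathrm{ap}(\mathcal X)$. $\mathrm{HAsg}$ is the set of all hyperassignments, $\mathrm{HAsg}(P)$ those with $\mathrm{ap}(\mathcal X)=P$, and $\mathrm{HAsg}_\supseteq(P)$ those with $\mathrm{ap}(\mathcal X)\supseteq P$. A choice function for $\mathcal X$ is a map $c:\mathcal X\to\mathrm{Asg}$ with $c(X)\in X$ for all $X\in\mathcal X$. The dual of $\mathcal X$ is $\overline{\mathcal X}=\{\mathrm{img}(c): c\text{ a choice function for }\mathcal X\}$.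 $\mathrm{par}(\mathcal X)$ is the set of pairs $(\mathcal X_1,\mathcal X_2)$ of (possibly empty) subsets of $\mathcal X$ with $\mathcal X_1\cap\mathcal X_2=\emptyset$ and $\mathcal X_1\cup\mathcal X_2=\mathcal X$. A functor over $P\subseteq AP$ is a function $F:\mathrm{Asg}(P)\to(\mathbb N\to\mathbb B)$; $\mathrm{Fnc}(P)$ is the set of all of them. $\mathrm{ext}(\chi,F,p)=\chi[p\mapsto F(\chi)]$ and $\mathrm{ext}(X,F,p)=\{\mathrm{ext}(\chi,F,p):\chi\in X\}$. For $\chi_1,\chi_2\in\mathrm{Asg}(P)$, $p\in P$, $k\in\mathbb N$: $\chi_1\approx^{>k}_p\chi_2$ iff $\chi_1(q)=\chi_2(q)$ for all $q\in P\setminus\{p\}$ and $\chi_1(p)(t)=\chi_2(p)(t)$ for all $t\le k$; $\chi_1\approx^{\ge k}_p\chi_2$ is defined the same way with $t<k$ in place of $t\le k$. $F\in\mathrm{Fnc}(P)$ is behavioral (resp. strongly behavioral) w.r.t. $p\in P$ if $F(\chi_1)(k)=F(\chi_2)(k)$ for all $k\in\mathbb N$ and all $\chi_1,\chi_2$ with $\chi_1\approx^{>k}_p\chi_2$ (resp. $\chi_1\approx^{\ge k}_p\chi_2$). A quantifier specification is a pair $\sigma=\langle P_B,P_S\rangle$ of subsets of $AP$; $\mathrm{Fnc}_\sigma(P)$ is the set of $F\in\mathrm{Fnc}(P)$ that are behavioral w.r.t. every $p\in P_B\cap P$ and strongly behavioral w.r.t. every $p\in P_S\cap P$. $\mathrm{ext}_\sigma(\mathcal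 X,p)=\{\mathrm{ext}(X,F,p):X\in\mathcal X,\ F\in\mathrm{Fnc}_\sigma(\mathrm{ap}(\mathcal X))\}$. GFG-QPTL formulas are generated by $\varphi::=\psi\mid\neg\varphi\mid\varphi\wedge\varphi\mid\varphi\vee\varphi\mid\exists p{:}\sigma.\varphi\mid\forall p{:}\sigma.\varphi$, where $\psi$ is an LTL formula over $AP$, $p\in AP$ and $\sigma$ a quantifier specification; we also write $\exists^\sigma p.\varphi$, $\forall^\sigma p.\varphi$. QPTL formulas are those in which every specification is $\langle\emptyset,\emptyset\rangle$. $\mathrm{free}(\varphi)$ is the set of free propositions. $\chi\models_{LTL}\psi$ iff the infinite word whose $t$-th letter is the valuation $q\mapsto\chi(q)(t)$ satisfies $\psi$ in the standard LTL sense. Alternation flags are $\exists\forall$ and $\forall\exists$; $\bar\alpha$ is the flag different from $\alpha$. For a GFG-QPTL formula $\varphi$, $\mathcal X\in\mathrm{HAsg}_\supseteq(\mathrm{free}(\varphi))$ and flag $\alpha$, $\mathcal X\models^\alpha\varphi$ is defined inductively: (1) for LTL $\psi$: $\mathcal X\models^{\exists\forall}\psi$ iff there is $X\in\mathcal X$ with $\chi\models_{LTL}\psi$ for all $\chi\in X$; $\mathcal X\models^{\forall\exists}\psi$ iff for every $X\in\mathcal X$ there is $\chi\in X$ with $\chi\models_{LTL}\psi$; (2) $\mathcal X\models^\alpha\neg\phi$ iff not $\mathcal X\models^{\bar\alpha}\phi$; (3) $\mathcal X\models^{\exists\forall}\phi_1\wedge\phi_2$ iff for every $(\mathcal X_1,\mathcal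 X_2)\in\mathrm{par}(\mathcal X)$, either ($\mathcal X_1\ne\emptyset$ and $\mathcal X_1\models^{\exists\forall}\phi_1$) or ($\mathcal X_2\ne\emptyset$ and $\mathcal X_2\models^{\exists\forall}\phi_2$); $\mathcal X\models^{\forall\exists}\phi_1\wedge\phi_2$ iff $\overline{\mathcal X}\models^{\exists\forall}\phi_1\wedge\phi_2$; (4) $\mathcal X\models^{\forall\exists}\phi_1\vee\phi_2$ iff there is $(\mathcal X_1,\mathcal X_2)\in\mathrm{par}(\mathcal X)$ such that ($\mathcal X_1\neq\emptyset$ implies $\mathcal X_1\models^{\forall\exists}\phi_1$) and ($\mathcal X_2\neq\emptyset$ implies $\mathcal X_2\models^{\forall\exists}\phi_2$); $\mathcal X\models^{\exists\forall}\phi_1\vee\phi_2$ iff $\overline{\mathcal X}\models^{\forall\exists}\phi_1\vee\phi_2$; (5) $\mathcal X\models^{\exists\forall}\exists p{:}\sigma.\phi$ iff $\mathrm{ext}_\sigma(\mathcal X,p)\models^{\exists\forall}\phi$; $\mathcal X\models^{\forall\exists}\exists p{:}\sigma.\phi$ iff $\overline{\mathcal X}\models^{\exists\forall}\exists p{:}\sigma.\phi$; (6) $\mathcal X\models^{\forall\exists}\forall p{:}\sigma.\phi$ iff $\mathrm{ext}_\sigma(\mathcal X,p)\models^{\forall\exists}\phi$; $\mathcal X\models^{\exists\forall}\forall p{:}\sigma.\phi$ iff $\overline{\mathcal X}\models^{\forall\exists}\forall p{:}\sigma.\phi$. A GFG-QPTL formula $\varphi$ is $\alpha$-satisfiable if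 $\mathcal X\models^\alpha\varphi$ for some $\mathcal X\in\mathrm{HAsg}(\mathrm{free}(\varphi))$. $\varphi\Rightarrow^\alpha\phi$ ($\alpha$-implication) holds iff $\mathrm{free}(\varphi)=\mathrm{free}(\phi)$ and for all $\mathcal X\in\mathrm{HAsg}_\supseteq(\mathrm{free}(\varphi))$, $\mathcal X\models^\alpha\varphi$ implies $\mathcal X\models^\alpha\phi$; $\varphi\equiv^\alpha\phi$ ($\alpha$-equivalence) holds iff $\mathrm{free}(\varphi)=\mathrm{free}(\phi)$ and for all such $\mathcal X$, $\mathcal X\models^\alpha\varphi$ iff $\mathcal X\models^\alpha\phi$. *)

theory Defs
  imports Main
begin

type_synonym tval = "nat \<Rightarrow> bool"
type_synonym 'a asg = "'a \<Rightarrow> tval option"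
type_synonym 'a hasg = "'a asg set set"

definition Asg :: "'a set \<Rightarrow> 'a asg set" where
  "Asg P = {\<chi>. dom \<chi> = P}"

definition HAsg :: "'a set \<Rightarrow> 'a hasg set" where
  "HAsg P = {XX. XX \<noteq> {} \<and> {} \<notin> XX \<and> (\<forall>X\<in>XX. X \<subseteq> Asg P)}"

definition HAsg_sup :: "'a set \<Rightarrow> 'a hasg set" where
  "HAsg_sup P = {XX. \<exists>Q. P \<subseteq> Q \<and> XX \<in> HAsg Q}"

definition ap :: "'a hasg \<Rightarrow> 'a set" where
  "ap XX = dom (SOME \<chi>. \<exists>X\<in>XX. \<chi> \<in> X)"

definition dual :: "'a hasg \<Rightarrow> 'a hasg" where
  "dual XX = {c ` XX | c. \<forall>X\<in>XX. c X \<in> X}"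

definition par :: "'a hasg \<Rightarrow> ('a hasg \<times> 'a hasg) set" where
  "par XX = {(X1, X2). X1 \<subseteq> XX \<and> X2 \<subseteq> XX \<and> X1 \<inter> X2 = {} \<and> X1 \<union> X2 = XX}"

type_synonym 'a fnc = "'a asg \<Rightarrow> tval"
type_synonym 'a qspec = "'a set \<times> 'a set"

definition ext_asg :: "'a asg \<Rightarrow> 'a fnc \<Rightarrow> 'a \<Rightarrow> 'a asg" where
  "ext_asg \<chi> F p = \<chi>(p \<mapsto> F \<chi>)"

definition ext_set :: "'a asg set \<Rightarrow> 'a fnc \<Rightarrow> 'a \<Rightarrow> 'a asg set" where
  "ext_set X F p = (\<lambda>\<chi>. ext_asg \<chi> F p) ` X"

definition approx_gt :: "'a set \<Rightarrow> 'a \<Rightarrow> nat \<Rightarrow> 'a asg \<Rightarrow> 'a asg \<Rightarrow> bool" where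
  "approx_gt P p k \<chi>1 \<chi>2 \<longleftrightarrow>
     (\<forall>q\<in>P - {p}. \<chi>1 q = \<chi>2 q) \<and> (\<forall>t\<le>k. the (\<chi>1 p) t = the (\<chi>2 p) t)"

definition approx_ge :: "'a set \<Rightarrow> 'a \<Rightarrow> nat \<Rightarrow> 'a asg \<Rightarrow> 'a asg \<Rightarrow> bool" where
  "approx_ge P p k \<chi>1 \<chi>2 \<longleftrightarrow>
     (\<forall>q\<in>P - {p}. \<chi>1 q = \<chi>2 q) \<and> (\<forall>t<k. the (\<chi>1 p) t = the (\<chi>2 p) t)"

text \<open>A functor over P is a map from Asg(P); we represent it by a total function whose
  values outside Asg(P) are irrelevant.\<close>

definition behavioral :: "'a set \<Rightarrow> 'a fnc \<Rightarrow> 'a \<Rightarrow> bool" where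
  "behavioral P F p \<longleftrightarrow> (\<forall>k. \<forall>\<chi>1\<in>Asg P. \<forall>\<chi>2\<in>Asg P.
      approx_gt P p k \<chi>1 \<chi>2 \<longrightarrow> F \<chi>1 k = F \<chi>2 k)"

definition strongly_behavioral :: "'a set \<Rightarrow> 'a fnc \<Rightarrow> 'a \<Rightarrow> bool" where
  "strongly_behavioral P F p \<longleftrightarrow> (\<forall>k. \<forall>\<chi>1\<in>Asg P. \<forall>\<chi>2\<in>Asg P.
      approx_ge P p k \<chi>1 \<chi>2 \<longrightarrow> F \<chi>1 k = F \<chi>2 k)"

definition Fnc_spec :: "'a qspec \<Rightarrow> 'a set \<Rightarrow> 'a fnc set" where
  "Fnc_spec \<sigma> P = {F. (\<forall>p\<in>fst \<sigma> \<inter> P. behavioral P F p) \<and>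
                      (\<forall>p\<in>snd \<sigma> \<inter> P. strongly_behavioral P F p)}"

definition ext_spec :: "'a qspec \<Rightarrow> 'a hasg \<Rightarrow> 'a \<Rightarrow> 'a hasg" where
  "ext_spec \<sigma> XX p = {ext_set X F p | X F. X \<in> XX \<and> F \<in> Fnc_spec \<sigma> (ap XX)}"

datatype 'a ltl = LTrue | LProp 'a | LNot "'a ltl" | LAnd "'a ltl" "'a ltl"
  | LOr "'a ltl" "'a ltl" | LNext "'a ltl" | LUntil "'a ltl" "'a ltl"

primrec ltl_sem :: "(nat \<Rightarrow> 'a \<Rightarrow> bool) \<Rightarrow> nat \<Rightarrow> 'a ltl \<Rightarrow> bool" where
  "ltl_sem w i LTrue = True"
| "ltl_sem w i (LProp q) = w i q"
| "ltl_sem w i (LNot \<psi>) = (\<not> ltl_sem w i \<psi>)"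
| "ltl_sem w i (LAnd \<psi>1 \<psi>2) = (ltl_sem w i \<psi>1 \<and> ltl_sem w i \<psi>2)"
| "ltl_sem w i (LOr \<psi>1 \<psi>2) = (ltl_sem w i \<psi>1 \<or> ltl_sem w i \<psi>2)"
| "ltl_sem w i (LNext \<psi>) = ltl_sem w (Suc i) \<psi>"
| "ltl_sem w i (LUntil \<psi>1 \<psi>2) =
     (\<exists>j\<ge>i. ltl_sem w j \<psi>2 \<and> (\<forall>k. i \<le> k \<and> k < j \<longrightarrow> ltl_sem w k \<psi>1))"

primrec ltl_atoms :: "'a ltl \<Rightarrow> 'a set" where
  "ltl_atoms LTrue = {}"
| "ltl_atoms (LProp q) = {q}"
| "ltl_atoms (LNot \<psi>) = ltl_atoms \<psi>"
| "ltl_atoms (LAnd \<psi>1 \<psi>2) = ltl_atoms \<psi>1 \<union> ltl_atoms \<psi>2"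
| "ltl_atoms (LOr \<psi>1 \<psi>2) = ltl_atoms \<psi>1 \<union> ltl_atoms \<psi>2"
| "ltl_atoms (LNext \<psi>) = ltl_atoms \<psi>"
| "ltl_atoms (LUntil \<psi>1 \<psi>2) = ltl_atoms \<psi>1 \<union> ltl_atoms \<psi>2"

text \<open>The word of an assignment: letter t is q \<mapsto> \<chi>(q)(t) (propositions outside the
  domain are read as false; they never occur in evaluated formulas).\<close>
definition asg_word :: "'a asg \<Rightarrow> nat \<Rightarrow> 'a \<Rightarrow> bool" where
  "asg_word \<chi> t q = (case \<chi> q of Some f \<Rightarrow> f t | None \<Rightarrow> False)"

definition models_ltl :: "'a asg \<Rightarrow> 'a ltl \<Rightarrow> bool" where
  "models_ltl \<chi> \<psi> \<longleftrightarrow> ltl_sem (asg_word \<chi>) 0 \<psi>"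

datatype 'a gfg = Ltl "'a ltl" | Neg "'a gfg" | Conj "'a gfg" "'a gfg" | Disj "'a gfg" "'a gfg"
  | Ex 'a "'a qspec" "'a gfg" | All 'a "'a qspec" "'a gfg"

primrec free :: "'a gfg \<Rightarrow> 'a set" where
  "free (Ltl \<psi>) = ltl_atoms \<psi>"
| "free (Neg \<phi>) = free \<phi>"
| "free (Conj \<phi>1 \<phi>2) = free \<phi>1 \<union> free \<phi>2"
| "free (Disj \<phi>1 \<phi>2) = free \<phi>1 \<union> free \<phi>2"
| "free (Ex p \<sigma> \<phi>) = free \<phi> - {p}"
| "free (All p \<sigma> \<phi>) = free \<phi> - {p}"

datatype flag = EA | AE

fun flip :: "flag \<Rightarrow> flag" where
  "flip EA = AE" | "flip AE = EA"

primrec sat :: "'a gfg \<Rightarrow> flag \<Rightarrow> 'a hasg \<Rightarrow> bool" where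
  "sat (Ltl \<psi>) \<alpha> XX =
     (case \<alpha> of EA \<Rightarrow> (\<exists>X\<in>XX. \<forall>\<chi>\<in>X. models_ltl \<chi> \<psi>)
               | AE \<Rightarrow> (\<forall>X\<in>XX. \<exists>\<chi>\<in>X. models_ltl \<chi> \<psi>))"
| "sat (Neg \<phi>) \<alpha> XX = (\<not> sat \<phi> (flip \<alpha>) XX)"
| "sat (Conj \<phi>1 \<phi>2) \<alpha> XX =
     (\<forall>(X1, X2)\<in>par (if \<alpha> = EA then XX else dual XX).
        (X1 \<noteq> {} \<and> sat \<phi>1 EA X1) \<or> (X2 \<noteq> {} \<and> sat \<phi>2 EA X2))"
| "sat (Disj \<phi>1 \<phi>2) \<alpha> XX =
     (\<exists>(X1, X2)\<in>par (if \<alpha> = AE then XX else dual XX).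
        (X1 \<noteq> {} \<longrightarrow> sat \<phi>1 AE X1) \<and> (X2 \<noteq> {} \<longrightarrow> sat \<phi>2 AE X2))"
| "sat (Ex p \<sigma> \<phi>) \<alpha> XX =
     sat \<phi> EA (ext_spec \<sigma> (if \<alpha> = EA then XX else dual XX) p)"
| "sat (All p \<sigma> \<phi>) \<alpha> XX =
     sat \<phi> AE (ext_spec \<sigma> (if \<alpha> = AE then XX else dual XX) p)"

definition satisfiable :: "flag \<Rightarrow> 'a gfg \<Rightarrow> bool" where
  "satisfiable \<alpha> \<phi> \<longleftrightarrow> (\<exists>XX\<in>HAsg (free \<phi>). sat \<phi> \<alpha> XX)"

definition alpha_implies :: "flag \<Rightarrow> 'a gfg \<Rightarrow> 'a gfg \<Rightarrow> bool" where
  "alpha_implies \<alpha> \<phi> \<phi>' \<longleftrightarrow> free \<phi> = free \<phi>' \<and>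
     (\<forall>XX\<in>HAsg_sup (free \<phi>). sat \<phi> \<alpha> XX \<longrightarrow> sat \<phi>' \<alpha> XX)"

definition alpha_equiv :: "flag \<Rightarrow> 'a gfg \<Rightarrow> 'a gfg \<Rightarrow> bool" where
  "alpha_equiv \<alpha> \<phi> \<phi>' \<longleftrightarrow> free \<phi> = free \<phi>' \<and>
     (\<forall>XX\<in>HAsg_sup (free \<phi>). sat \<phi> \<alpha> XX \<longleftrightarrow> sat \<phi>' \<alpha> XX)"

end

theory Submission
  imports Defs
begin

definition RR :: "'a hasg \<Rightarrow> 'a hasg \<Rightarrow> bool" where
  "RR YY XX \<longleftrightarrow> (\<forall>X\<in>XX. \<exists>Y\<in>YY. Y \<subseteq> X)"

definition UU :: "'a set \<Rightarrow> 'a hasg \<Rightarrow> bool" where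
  "UU Q XX \<longleftrightarrow> (\<forall>X\<in>XX. X \<subseteq> Asg Q)"

lemma dual_RR: assumes "RR YY XX" shows "RR (dual XX) (dual YY)"
  unfolding RR_def
proof
  fix Z assume "Z \<in> dual YY"
  then obtain c where c: "\<forall>Y\<in>YY. c Y \<in> Y" "Z = c ` YY" by (auto simp: dual_def)
  from assms have "\<forall>X\<in>XX. \<exists>Y. Y \<in> YY \<and> Y \<subseteq> X" unfolding RR_def by blast
  from bchoice[OF this] obtain g where g: "\<forall>X\<in>XX. g X \<in> YY \<and> g X \<subseteq> X" by blast
  have "(c \<circ> g) ` XX \<in> dual XX" unfolding dual_def
    by (rule CollectI, rule exI[of _ "c \<circ> g"]) (use c g in auto)
  moreover have "(c \<circ> g) ` XX \<subseteq> Z" using c g by auto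
  ultimately show "\<exists>Y\<in>dual XX. Y \<subseteq> Z" by blast
qed

lemma par_RR:
  assumes "RR A B" "(A1, A2) \<in> par A"
  shows "\<exists>B1 B2. (B1, B2) \<in> par B \<and> RR A1 B1 \<and> RR A2 B2 \<and>
     (B1 \<noteq> {} \<longrightarrow> A1 \<noteq> {}) \<and> (B2 \<noteq> {} \<longrightarrow> A2 \<noteq> {})"
proof -
  define B1 where "B1 = {X\<in>B. \<exists>Y\<in>A1. Y \<subseteq> X}"
  define B2 where "B2 = B - B1"
  have f1: "(B1, B2) \<in> par B" unfolding par_def B1_def B2_def by auto
  have f2: "RR A1 B1" unfolding RR_def B1_def by auto
  have A: "A = A1 \<union> A2" using assms(2) unfolding par_def by auto
  have B2: "\<And>X. X \<in> B2 \<Longrightarrow> \<exists>Y\<in>A2. Y \<subseteq> X"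
  proof -
    fix X assume "X \<in> B2"
    then have "X \<in> B" "\<not> (\<exists>Y\<in>A1. Y \<subseteq> X)" unfolding B2_def B1_def by auto
    moreover obtain Y where "Y \<in> A" "Y \<subseteq> X" using assms(1) \<open>X \<in> B\<close> unfolding RR_def by blast
    ultimately show "\<exists>Y\<in>A2. Y \<subseteq> X" using A by blast
  qed
  moreover have "RR A2 B2" using B2 unfolding RR_def by blast
  moreover have "B1 \<noteq> {} \<longrightarrow> A1 \<noteq> {}" unfolding B1_def by auto
  moreover note f1 f2
  moreover have "B2 \<noteq> {} \<longrightarrow> A2 \<noteq> {}" using B2 by blast
  ultimately show ?thesis by blast
qed

lemma UU_dual: "UU Q XX \<Longrightarrow> UU Q (dual XX)"
  unfolding UU_def dual_def by blast

lemma UU_par: "UU Q XX \<Longrightarrow> (X1, X2) \<in> par XX \<Longrightarrow> UU Q X1 \<and> UU Q X2"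
  unfolding UU_def par_def by auto

lemma UU_ext: "UU Q XX \<Longrightarrow> UU (insert p Q) (ext_spec \<sigma> XX p)"
  unfolding UU_def ext_spec_def ext_set_def ext_asg_def Asg_def
  by (auto simp: subset_iff split: if_splits; blast)

lemma Fnc_const: "(\<lambda>_ _. False) \<in> Fnc_spec \<sigma> P"
  unfolding Fnc_spec_def behavioral_def strongly_behavioral_def by auto

lemma ap_UU: assumes "UU Q XX" "X \<in> XX" "X \<noteq> {}" shows "ap XX = Q"
proof -
  have "\<exists>\<chi>. \<exists>X\<in>XX. \<chi> \<in> X" using assms by blast
  then have "\<exists>X\<in>XX. (SOME \<chi>. \<exists>X\<in>XX. \<chi> \<in> X) \<in> X" by (rule someI_ex)
  then show ?thesis using assms(1) unfolding ap_def UU_def Asg_def by blast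
qed

lemma ext_RR:
  assumes "UU Q XX" "UU Q YY" "RR YY XX"
  shows "RR (ext_spec \<sigma> YY p) (ext_spec \<sigma> XX p)"
  unfolding RR_def
proof
  fix Z assume "Z \<in> ext_spec \<sigma> XX p"
  then obtain X F where XF: "Z = ext_set X F p" "X \<in> XX" "F \<in> Fnc_spec \<sigma> (ap XX)"
    by (auto simp: ext_spec_def)
  obtain Y where Y: "Y \<in> YY" "Y \<subseteq> X" using assms(3) XF unfolding RR_def by blast
  show "\<exists>W\<in>ext_spec \<sigma> YY p. W \<subseteq> Z"
  proof (cases "Y = {}")
    case True
    have "ext_set Y (\<lambda>_ _. False) p \<in> ext_spec \<sigma> YY p"
      unfolding ext_spec_def using Y Fnc_const by blast
    moreover have "ext_set Y (\<lambda>_ _. False) p = {}" using True by (simp add: ext_set_def)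
    ultimately show ?thesis by blast
  next
    case False
    then have "ap YY = Q" "ap XX = Q" using ap_UU[OF assms(2) Y(1)] ap_UU[OF assms(1) XF(2)] Y
      by auto
    then have "ext_set Y F p \<in> ext_spec \<sigma> YY p"
      unfolding ext_spec_def using Y XF by auto
    moreover have "ext_set Y F p \<subseteq> Z" using XF Y by (auto simp: ext_set_def)
    ultimately show ?thesis by blast
  qed
qed

lemma mono:
  "UU Q XX \<Longrightarrow> UU Q YY \<Longrightarrow> RR YY XX \<Longrightarrow>
    (sat \<phi> EA XX \<longrightarrow> sat \<phi> EA YY) \<and> (sat \<phi> AE YY \<longrightarrow> sat \<phi> AE XX)"
proof (induction \<phi> arbitrary: Q XX YY)
  case (Ltl \<psi>)
  have R: "\<forall>X\<in>XX. \<exists>Y\<in>YY. Y \<subseteq> X" using Ltl.prems(3) unfolding RR_def .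
  have 1: "sat (Ltl \<psi>) EA YY" if "sat (Ltl \<psi>) EA XX"
  proof -
    from that obtain X where "X \<in> XX" "\<forall>\<chi>\<in>X. models_ltl \<chi> \<psi>" by auto
    with R obtain Y where "Y \<in> YY" "Y \<subseteq> X" by blast
    with \<open>\<forall>\<chi>\<in>X. models_ltl \<chi> \<psi>\<close> show ?thesis by auto
  qed
  have 2: "sat (Ltl \<psi>) AE XX" if "sat (Ltl \<psi>) AE YY"
  proof -
    have "\<exists>\<chi>\<in>X. models_ltl \<chi> \<psi>" if "X \<in> XX" for X
    proof -
      from R that obtain Y where "Y \<in> YY" "Y \<subseteq> X" by blast
      with \<open>sat (Ltl \<psi>) AE YY\<close> show ?thesis by auto
    qed
    then show ?thesis by simp
  qed
  show ?case using 1 2 by blast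
next
  case (Neg \<phi>)
  show ?case using Neg.IH[OF Neg.prems] by auto
next
  case (Conj \<phi>1 \<phi>2)
  have dR: "RR (dual XX) (dual YY)" using dual_RR Conj.prems by blast
  have uXd: "UU Q (dual XX)" and uYd: "UU Q (dual YY)" using UU_dual Conj.prems by blast+
  show ?case
  proof (intro conjI impI)
    assume H: "sat (Conj \<phi>1 \<phi>2) EA XX"
    have "(Y1 \<noteq> {} \<and> sat \<phi>1 EA Y1) \<or> (Y2 \<noteq> {} \<and> sat \<phi>2 EA Y2)"
      if P: "(Y1, Y2) \<in> par YY" for Y1 Y2
    proof -
      obtain X1 X2 where X: "(X1, X2) \<in> par XX" "RR Y1 X1" "RR Y2 X2"
        "X1 \<noteq> {} \<longrightarrow> Y1 \<noteq> {}" "X2 \<noteq> {} \<longrightarrow> Y2 \<noteq> {}"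
        using par_RR[OF Conj.prems(3) P] by blast
      have u: "UU Q X1" "UU Q X2" "UU Q Y1" "UU Q Y2"
        using UU_par[OF Conj.prems(1) X(1)] UU_par[OF Conj.prems(2) P] by auto
      from H X(1) have "(X1 \<noteq> {} \<and> sat \<phi>1 EA X1) \<or> (X2 \<noteq> {} \<and> sat \<phi>2 EA X2)" by auto
      then show "(Y1 \<noteq> {} \<and> sat \<phi>1 EA Y1) \<or> (Y2 \<noteq> {} \<and> sat \<phi>2 EA Y2)"
        using Conj.IH(1)[OF u(1) u(3) X(2)] Conj.IH(2)[OF u(2) u(4) X(3)] X(4,5) by blast
    qed
    then show "sat (Conj \<phi>1 \<phi>2) EA YY" by auto
  next
    assume H: "sat (Conj \<phi>1 \<phi>2) AE YY"
    have "(A1 \<noteq> {} \<and> sat \<phi>1 EA A1) \<or> (A2 \<noteq> {} \<and> sat \<phi>2 EA A2)"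
      if P: "(A1, A2) \<in> par (dual XX)" for A1 A2
    proof -
      obtain B1 B2 where B: "(B1, B2) \<in> par (dual YY)" "RR A1 B1" "RR A2 B2"
        "B1 \<noteq> {} \<longrightarrow> A1 \<noteq> {}" "B2 \<noteq> {} \<longrightarrow> A2 \<noteq> {}"
        using par_RR[OF dR P] by blast
      have u: "UU Q A1" "UU Q A2" "UU Q B1" "UU Q B2"
        using UU_par[OF uXd P] UU_par[OF uYd B(1)] by auto
      from H B(1) have "(B1 \<noteq> {} \<and> sat \<phi>1 EA B1) \<or> (B2 \<noteq> {} \<and> sat \<phi>2 EA B2)" by auto
      then show "(A1 \<noteq> {} \<and> sat \<phi>1 EA A1) \<or> (A2 \<noteq> {} \<and> sat \<phi>2 EA A2)"
        using Conj.IH(1)[OF u(3) u(1) B(2)] Conj.IH(2)[OF u(4) u(2) B(3)] B(4,5) by blast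
    qed
    then show "sat (Conj \<phi>1 \<phi>2) AE XX" by auto
  qed
next
  case (Disj \<phi>1 \<phi>2)
  have dR: "RR (dual XX) (dual YY)" using dual_RR Disj.prems by blast
  have uXd: "UU Q (dual XX)" and uYd: "UU Q (dual YY)" using UU_dual Disj.prems by blast+
  show ?case
  proof (intro conjI impI)
    assume H: "sat (Disj \<phi>1 \<phi>2) EA XX"
    then obtain A1 A2 where P: "(A1, A2) \<in> par (dual XX)"
      and HA: "(A1 \<noteq> {} \<longrightarrow> sat \<phi>1 AE A1) \<and> (A2 \<noteq> {} \<longrightarrow> sat \<phi>2 AE A2)" by auto
    obtain B1 B2 where B: "(B1, B2) \<in> par (dual YY)" "RR A1 B1" "RR A2 B2"
      "B1 \<noteq> {} \<longrightarrow> A1 \<noteq> {}" "B2 \<noteq> {} \<longrightarrow> A2 \<noteq> {}"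
      using par_RR[OF dR P] by blast
    have u: "UU Q A1" "UU Q A2" "UU Q B1" "UU Q B2"
      using UU_par[OF uXd P] UU_par[OF uYd B(1)] by auto
    have "(B1 \<noteq> {} \<longrightarrow> sat \<phi>1 AE B1) \<and> (B2 \<noteq> {} \<longrightarrow> sat \<phi>2 AE B2)"
      using HA Disj.IH(1)[OF u(3) u(1) B(2)] Disj.IH(2)[OF u(4) u(2) B(3)] B(4,5) by blast
    then show "sat (Disj \<phi>1 \<phi>2) EA YY" using B(1) by auto
  next
    assume H: "sat (Disj \<phi>1 \<phi>2) AE YY"
    then obtain A1 A2 where P: "(A1, A2) \<in> par YY"
      and HA: "(A1 \<noteq> {} \<longrightarrow> sat \<phi>1 AE A1) \<and> (A2 \<noteq> {} \<longrightarrow> sat \<phi>2 AE A2)" by auto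
    obtain B1 B2 where B: "(B1, B2) \<in> par XX" "RR A1 B1" "RR A2 B2"
      "B1 \<noteq> {} \<longrightarrow> A1 \<noteq> {}" "B2 \<noteq> {} \<longrightarrow> A2 \<noteq> {}"
      using par_RR[OF Disj.prems(3) P] by blast
    have u: "UU Q A1" "UU Q A2" "UU Q B1" "UU Q B2"
      using UU_par[OF Disj.prems(2) P] UU_par[OF Disj.prems(1) B(1)] by auto
    have "(B1 \<noteq> {} \<longrightarrow> sat \<phi>1 AE B1) \<and> (B2 \<noteq> {} \<longrightarrow> sat \<phi>2 AE B2)"
      using HA Disj.IH(1)[OF u(3) u(1) B(2)] Disj.IH(2)[OF u(4) u(2) B(3)] B(4,5) by blast
    then show "sat (Disj \<phi>1 \<phi>2) AE XX" using B(1) by auto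
  qed
next
  case (Ex p \<sigma> \<phi>)
  have dR: "RR (dual XX) (dual YY)" using dual_RR Ex.prems by blast
  have uXd: "UU Q (dual XX)" and uYd: "UU Q (dual YY)" using UU_dual Ex.prems by blast+
  have 1: "RR (ext_spec \<sigma> YY p) (ext_spec \<sigma> XX p)" by (rule ext_RR[OF Ex.prems])
  have 2: "RR (ext_spec \<sigma> (dual XX) p) (ext_spec \<sigma> (dual YY) p)" by (rule ext_RR[OF uYd uXd dR])
  show ?case
    using Ex.IH[OF UU_ext[OF Ex.prems(1)] UU_ext[OF Ex.prems(2)] 1]
      Ex.IH[OF UU_ext[OF uYd] UU_ext[OF uXd] 2] by simp
next
  case (All p \<sigma> \<phi>)
  have dR: "RR (dual XX) (dual YY)" using dual_RR All.prems by blast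
  have uXd: "UU Q (dual XX)" and uYd: "UU Q (dual YY)" using UU_dual All.prems by blast+
  have 1: "RR (ext_spec \<sigma> YY p) (ext_spec \<sigma> XX p)" by (rule ext_RR[OF All.prems])
  have 2: "RR (ext_spec \<sigma> (dual XX) p) (ext_spec \<sigma> (dual YY) p)" by (rule ext_RR[OF uYd uXd dR])
  show ?case
    using All.IH[OF UU_ext[OF All.prems(1)] UU_ext[OF All.prems(2)] 1]
      All.IH[OF UU_ext[OF uYd] UU_ext[OF uXd] 2] by simp
qed

lemma dualI: "\<forall>X\<in>XX. c X \<in> X \<Longrightarrow> c ` XX \<in> dual XX"
  by (auto simp: dual_def)

lemma dd1: "RR (dual (dual XX)) XX"
  unfolding RR_def
proof
  fix X assume X: "X \<in> XX"
  define d where "d Z = (SOME \<chi>. \<chi> \<in> Z \<and> \<chi> \<in> X)" for Z :: "'a asg set"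
  have d: "d Z \<in> Z \<and> d Z \<in> X" if "Z \<in> dual XX" for Z
  proof -
    from that obtain c where "\<forall>X\<in>XX. c X \<in> X" "Z = c ` XX" by (auto simp: dual_def)
    then have "\<exists>\<chi>. \<chi> \<in> Z \<and> \<chi> \<in> X" using X by blast
    then show ?thesis unfolding d_def by (rule someI_ex)
  qed
  have "d ` dual XX \<in> dual (dual XX)" by (rule dualI) (use d in blast)
  moreover have "d ` dual XX \<subseteq> X" using d by auto
  ultimately show "\<exists>Y\<in>dual (dual XX). Y \<subseteq> X" by blast
qed

lemma dd2: "RR XX (dual (dual XX))"
  unfolding RR_def
proof
  fix W assume "W \<in> dual (dual XX)"
  then obtain d where d: "\<forall>Z\<in>dual XX. d Z \<in> Z" "W = d ` dual XX" by (auto simp: dual_def)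
  show "\<exists>X\<in>XX. X \<subseteq> W"
  proof (rule ccontr)
    assume "\<not> (\<exists>X\<in>XX. X \<subseteq> W)"
    then have "\<forall>X\<in>XX. \<exists>\<chi>. \<chi> \<in> X \<and> \<chi> \<notin> W" by blast
    from bchoice[OF this] obtain c where c: "\<forall>X\<in>XX. c X \<in> X \<and> c X \<notin> W" by blast
    have Z: "c ` XX \<in> dual XX" by (rule dualI) (use c in blast)
    then have "d (c ` XX) \<in> c ` XX" using d(1) by blast
    then obtain X where "X \<in> XX" "d (c ` XX) = c X" by blast
    moreover have "d (c ` XX) \<in> W" unfolding d(2) using Z by (rule imageI)
    ultimately show False using c by metis
  qed
qed

lemma D: "UU Q XX \<Longrightarrow> sat \<phi> \<alpha> (dual (dual XX)) = sat \<phi> \<alpha> XX"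
proof -
  assume u: "UU Q XX"
  have u2: "UU Q (dual (dual XX))" using u by (intro UU_dual)
  note m1 = mono[OF u2 u dd2, of \<phi>] and m2 = mono[OF u u2 dd1, of \<phi>]
  show ?thesis using m1 m2 by (cases \<alpha>) auto
qed

lemma L_Ltl:
  "(sat (Ltl \<psi>) EA XX = sat (Ltl \<psi>) AE (dual XX)) \<and> (sat (Ltl \<psi>) AE XX = sat (Ltl \<psi>) EA (dual XX))"
proof (intro conjI)
  show "sat (Ltl \<psi>) EA XX = sat (Ltl \<psi>) AE (dual XX)"
  proof
    assume "sat (Ltl \<psi>) EA XX"
    then obtain X where X: "X \<in> XX" "\<forall>\<chi>\<in>X. models_ltl \<chi> \<psi>" by auto
    show "sat (Ltl \<psi>) AE (dual XX)"
    proof (simp, intro ballI)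
      fix Z assume "Z \<in> dual XX"
      then obtain c where "\<forall>X\<in>XX. c X \<in> X" "Z = c ` XX" by (auto simp: dual_def)
      then show "\<exists>\<chi>\<in>Z. models_ltl \<chi> \<psi>" using X by blast
    qed
  next
    assume H: "sat (Ltl \<psi>) AE (dual XX)"
    show "sat (Ltl \<psi>) EA XX"
    proof (rule ccontr)
      assume "\<not> sat (Ltl \<psi>) EA XX"
      then have "\<forall>X\<in>XX. \<exists>\<chi>. \<chi> \<in> X \<and> \<not> models_ltl \<chi> \<psi>" by auto
      from bchoice[OF this] obtain c where c: "\<forall>X\<in>XX. c X \<in> X \<and> \<not> models_ltl (c X) \<psi>" by blast
      have "c ` XX \<in> dual XX" by (rule dualI) (use c in blast)
      with H c show False by auto
    qed
  qed
next
  show "sat (Ltl \<psi>) AE XX = sat (Ltl \<psi>) EA (dual XX)"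
  proof
    assume "sat (Ltl \<psi>) AE XX"
    then have "\<forall>X\<in>XX. \<exists>\<chi>. \<chi> \<in> X \<and> models_ltl \<chi> \<psi>" by auto
    from bchoice[OF this] obtain c where c: "\<forall>X\<in>XX. c X \<in> X \<and> models_ltl (c X) \<psi>" by blast
    have "c ` XX \<in> dual XX" by (rule dualI) (use c in blast)
    then show "sat (Ltl \<psi>) EA (dual XX)" using c by (simp, intro bexI[of _ "c ` XX"]) auto
  next
    assume "sat (Ltl \<psi>) EA (dual XX)"
    then obtain Z where Z: "Z \<in> dual XX" "\<forall>\<chi>\<in>Z. models_ltl \<chi> \<psi>" by auto
    then obtain c where "\<forall>X\<in>XX. c X \<in> X" "Z = c ` XX" by (auto simp: dual_def)
    with Z show "sat (Ltl \<psi>) AE XX" by auto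
  qed
qed

lemma L: "UU Q XX \<Longrightarrow>
  (sat \<phi> EA XX = sat \<phi> AE (dual XX)) \<and> (sat \<phi> AE XX = sat \<phi> EA (dual XX))"
proof (induction \<phi> arbitrary: XX)
  case (Ltl \<psi>)
  then show ?case using L_Ltl by blast
next
  case (Neg \<phi>)
  then show ?case by simp
next
  case (Conj a b)
  have "sat (Conj a b) AE (dual XX) = sat (Conj a b) EA (dual (dual XX))" by simp
  then show ?case using D[OF Conj.prems, of "Conj a b" EA] by simp
next
  case (Disj a b)
  have "sat (Disj a b) EA (dual XX) = sat (Disj a b) AE (dual (dual XX))" by simp
  then show ?case using D[OF Disj.prems, of "Disj a b" AE] by simp
next
  case (Ex p \<sigma> a)
  have "sat (Ex p \<sigma> a) AE (dual XX) = sat (Ex p \<sigma> a) EA (dual (dual XX))" by simp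
  then show ?case using D[OF Ex.prems, of "Ex p \<sigma> a" EA] by simp
next
  case (All p \<sigma> a)
  have "sat (All p \<sigma> a) EA (dual XX) = sat (All p \<sigma> a) AE (dual (dual XX))" by simp
  then show ?case using D[OF All.prems, of "All p \<sigma> a" AE] by simp
qed

lemma HAsg_dual: assumes "XX \<in> HAsg Q" shows "dual XX \<in> HAsg Q"
proof -
  have ne: "XX \<noteq> {}" "{} \<notin> XX" and sub: "\<forall>X\<in>XX. X \<subseteq> Asg Q" using assms by (auto simp: HAsg_def)
  define c where "c X = (SOME \<chi>. \<chi> \<in> X)" for X :: "'a asg set"
  have "\<forall>X\<in>XX. c X \<in> X" unfolding c_def using ne by (metis ex_in_conv someI_ex)
  then have "c ` XX \<in> dual XX" by (rule dualI)
  then have "dual XX \<noteq> {}" by blast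
  moreover have "{} \<notin> dual XX" using ne unfolding dual_def by blast
  moreover have "\<forall>Z\<in>dual XX. Z \<subseteq> Asg Q" using sub unfolding dual_def by blast
  ultimately show ?thesis by (simp add: HAsg_def)
qed

lemma HAsg_UU: "XX \<in> HAsg Q \<Longrightarrow> UU Q XX"
  by (simp add: HAsg_def UU_def)

lemma HAsg_sup_dual: "XX \<in> HAsg_sup P \<Longrightarrow> dual XX \<in> HAsg_sup P"
  unfolding HAsg_sup_def using HAsg_dual by blast

lemma HAsg_sup_UU: "XX \<in> HAsg_sup P \<Longrightarrow> \<exists>Q. UU Q XX"
  unfolding HAsg_sup_def using HAsg_UU by blast

lemma sat_equiv: "satisfiable EA \<phi> \<longleftrightarrow> satisfiable AE \<phi>"
proof
  assume "satisfiable EA \<phi>"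
  then obtain XX where X: "XX \<in> HAsg (free \<phi>)" "sat \<phi> EA XX" by (auto simp: satisfiable_def)
  have "sat \<phi> AE (dual XX)" using L[OF HAsg_UU[OF X(1)], of \<phi>] X(2) by blast
  then show "satisfiable AE \<phi>" using HAsg_dual[OF X(1)] by (auto simp: satisfiable_def)
next
  assume "satisfiable AE \<phi>"
  then obtain XX where X: "XX \<in> HAsg (free \<phi>)" "sat \<phi> AE XX" by (auto simp: satisfiable_def)
  have "sat \<phi> EA (dual XX)" using L[OF HAsg_UU[OF X(1)], of \<phi>] X(2) by blast
  then show "satisfiable EA \<phi>" using HAsg_dual[OF X(1)] by (auto simp: satisfiable_def)
qed

lemma LL: "XX \<in> HAsg_sup P \<Longrightarrow>
    (sat \<psi> EA XX = sat \<psi> AE (dual XX)) \<and> (sat \<psi> AE XX = sat \<psi> EA (dual XX))"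
proof -
  assume "XX \<in> HAsg_sup P"
  then obtain Q where "UU Q XX" using HAsg_sup_UU by blast
  then show ?thesis by (rule L)
qed

lemma trans_gen:
  assumes "\<And>XX. XX \<in> S \<Longrightarrow> dual XX \<in> S"
    and "\<And>XX \<psi>. XX \<in> S \<Longrightarrow> (f \<psi> EA XX = f \<psi> AE (dual XX)) \<and> (f \<psi> AE XX = f \<psi> EA (dual XX))"
  shows "(\<forall>XX\<in>S. f a EA XX \<longrightarrow> f b EA XX) \<longleftrightarrow> (\<forall>XX\<in>S. f a AE XX \<longrightarrow> f b AE XX)"
    and "(\<forall>XX\<in>S. f a EA XX \<longleftrightarrow> f b EA XX) \<longleftrightarrow> (\<forall>XX\<in>S. f a AE XX \<longleftrightarrow> f b AE XX)"
proof -
  show "(\<forall>XX\<in>S. f a EA XX \<longrightarrow> f b EA XX) \<longleftrightarrow> (\<forall>XX\<in>S. f a AE XX \<longrightarrow> f b AE XX)"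
  proof safe
    fix XX assume H: "\<forall>XX\<in>S. f a EA XX \<longrightarrow> f b EA XX" and X: "XX \<in> S" "f a AE XX"
    have "f a EA (dual XX)" using assms(2)[OF X(1), of a] X(2) by simp
    then have "f b EA (dual XX)" using H assms(1)[OF X(1)] by simp
    then show "f b AE XX" using assms(2)[OF X(1), of b] by simp
  next
    fix XX assume H: "\<forall>XX\<in>S. f a AE XX \<longrightarrow> f b AE XX" and X: "XX \<in> S" "f a EA XX"
    have "f a AE (dual XX)" using assms(2)[OF X(1), of a] X(2) by simp
    then have "f b AE (dual XX)" using H assms(1)[OF X(1)] by simp
    then show "f b EA XX" using assms(2)[OF X(1), of b] by simp
  qed
  show "(\<forall>XX\<in>S. f a EA XX \<longleftrightarrow> f b EA XX) \<longleftrightarrow> (\<forall>XX\<in>S. f a AE XX \<longleftrightarrow> f b AE XX)"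
  proof safe
    fix XX assume H: "\<forall>XX\<in>S. f a EA XX \<longleftrightarrow> f b EA XX" and X: "XX \<in> S"
    have "f a EA (dual XX) \<longleftrightarrow> f b EA (dual XX)" using H assms(1)[OF X(1)] by simp
    then show "f a AE XX \<Longrightarrow> f b AE XX" "f b AE XX \<Longrightarrow> f a AE XX"
      using assms(2)[OF X(1), of a] assms(2)[OF X(1), of b] by simp+
  next
    fix XX assume H: "\<forall>XX\<in>S. f a AE XX \<longleftrightarrow> f b AE XX" and X: "XX \<in> S"
    have "f a AE (dual XX) \<longleftrightarrow> f b AE (dual XX)" using H assms(1)[OF X(1)] by simp
    then show "f a EA XX \<Longrightarrow> f b EA XX" "f b EA XX \<Longrightarrow> f a EA XX"
      using assms(2)[OF X(1), of a] assms(2)[OF X(1), of b] by simp+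
  qed
qed

theorem mainTheorem10:
  fixes \<phi> \<phi>' :: "'a gfg"
  shows "(satisfiable EA \<phi> \<longleftrightarrow> satisfiable AE \<phi>) \<and>
         (alpha_implies EA \<phi> \<phi>' \<longleftrightarrow> alpha_implies AE \<phi> \<phi>') \<and>
         (alpha_equiv EA \<phi> \<phi>' \<longleftrightarrow> alpha_equiv AE \<phi> \<phi>')"
proof -
  note t = trans_gen[where S="HAsg_sup (free \<phi>)" and f=sat and a=\<phi> and b=\<phi>',
      OF HAsg_sup_dual LL]
  have i: "alpha_implies EA \<phi> \<phi>' \<longleftrightarrow> alpha_implies AE \<phi> \<phi>'"
    unfolding alpha_implies_def using t(1) by simp
  have e: "alpha_equiv EA \<phi> \<phi>' \<longleftrightarrow> alpha_equiv AE \<phi> \<phi>'"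
    unfolding alpha_equiv_def using t(2) by simp
  show ?thesis using sat_equiv i e by simp
qed

end
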